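(* For $s \in J$ and $f \in Y$, the stochastic process $(V(s,t)f)_{t \in J(s)}$ is adapted to the augmented filtration \[ \mathcal{F}_t(s):=\sigma \left[x_{n \wedge N_s(t)}(s), T_{n \wedge N_s(t)}(s) : n \in \mathbb{N} \right] \vee \sigma(\mathbb{P}\text{-null sets}), \qquad t\in J(s), \] i.e. $V(s,t)f$ is $\mathcal F_t(s)$–Borel$(Y)$ measurable for every $t\in J(s)$.
   Context: $(Y,\|\cdot\|)$ is a real separable Banach space with Borel $\sigma$-algebra $\mathcal Y$; $J$ is $\mathbb{R}^+$ or $[0,T_\infty]$, $\Delta_J=\{(s,t)\in J^2:s\le t\}$, $J(s)=\{t\in J:t\ge s\}$. An inhomogeneous $Y$-semigroup is a map $\Gamma:\Delta_J\to\mathcal B(Y)$ with $\Gamma(t,t)=I$ and $\Gamma(s,r)\Gamma(r,t)=\Gamma(s,t)$ for $s\le r\le t$. Let $(\Omega,\mathcal F,\mathbb P)$ be a complete probability space, $X$ a finite set with $\sigma$-algebra $\mathcal X$ of all subsets, $(x_n)_{n\ge0}$ $X$-valued and $(\tau_n)_{n\ge1}$ $(0,\infty)$-valued random variables, $\tau_0=0$, $T_n=\sum_{k=0}^n\tau_k$, such that $(x_n,T_n)$ is a Markov renewal process: there is a semi-Markov kernel $Q$ with $\mathbb P[x_{n+1}=y,T_{n+1}-T_n\le t\mid x_k,T_k,k\le n]=Q(x_n,y,t)$ a.s. Let $N(t)=\sup\{n:T_n\le t\}$; $\Omega$ is replaced by the full-measure event $\{N(t)<\infty\ \forall t\in\mathbb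 Q\}$ (with restricted $\sigma$-algebra and probability). Set $x(t)=x_{N(t)}$, and for $s\le t$: $N_s(t)=N(t)-N(s)$, $T_0(s)=s$, $T_n(s)=T_{N(s)+n}$ for $n\ge1$, $x_n(s)=x(T_n(s))$. Let $(\Gamma_x)_{x\in X}$ be inhomogeneous $Y$-semigroups such that for each $s\in J$, $(r,t,x,f)\mapsto\Gamma_x(r\wedge t,r\vee t)f$ is $\mathrm{Bor}(J(s))\otimes\mathrm{Bor}(J(s))\otimes\mathcal X\otimes\mathcal Y$–$\mathcal Y$ measurable, and $(D(x,y))_{x,y\in X}\subseteq\mathcal B(Y)$ contractions ($\|D(x,y)\|\le1$) with $(x,y,f)\mapsto D(x,y)f$ measurable. The inhomogeneous random evolution is defined pathwise for $(s,t)\in\Delta_J$ by $V(s,t)=\Big[\prod_{k=1}^{N_s(t)}\Gamma_{x_{k-1}(s)}(T_{k-1}(s),T_k(s))D(x_{k-1}(s),x_k(s))\Big]\Gamma_{x(t)}(T_{N_s(t)}(s),t)$, where the product is ordered left to right ($\prod_{k=1}^nA_k=A_1\cdots A_n$) and the empty product is $I$. *)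

theory Defs
  imports "HOL-Probability.Probability"
begin

definition time_domain :: "real set \<Rightarrow> bool" where
  "time_domain J \<longleftrightarrow> J = {0..} \<or> (\<exists>Tinf>0. J = {0..Tinf})"

definition Jfrom :: "real set \<Rightarrow> real \<Rightarrow> real set" where
  "Jfrom J s = {t \<in> J. s \<le> t}"

definition inhom_semigroup ::
  "real set \<Rightarrow> (real \<Rightarrow> real \<Rightarrow> ('y::real_normed_vector \<Rightarrow>\<^sub>L 'y)) \<Rightarrow> bool" where
  "inhom_semigroup J G \<longleftrightarrow>
     (\<forall>t\<in>J. G t t = id_blinfun) \<and>
     (\<forall>s\<in>J. \<forall>r\<in>J. \<forall>t\<in>J. s \<le> r \<and> r \<le> t \<longrightarrow> G s r o\<^sub>L G r t = G s t)"

definition renT :: "(nat \<Rightarrow> 'a \<Rightarrow> real) \<Rightarrow> nat \<Rightarrow> 'a \<Rightarrow> real" where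
  "renT tau n \<omega> = (\<Sum>k\<in>{1..n}. tau k \<omega>)"

definition renN :: "(nat \<Rightarrow> 'a \<Rightarrow> real) \<Rightarrow> real \<Rightarrow> 'a \<Rightarrow> nat" where
  "renN tau t \<omega> = Max {n. renT tau n \<omega> \<le> t}"

definition xproc :: "(nat \<Rightarrow> 'a \<Rightarrow> 'x) \<Rightarrow> (nat \<Rightarrow> 'a \<Rightarrow> real) \<Rightarrow> real \<Rightarrow> 'a \<Rightarrow> 'x" where
  "xproc xs tau t \<omega> = xs (renN tau t \<omega>) \<omega>"

definition Ns :: "(nat \<Rightarrow> 'a \<Rightarrow> real) \<Rightarrow> real \<Rightarrow> real \<Rightarrow> 'a \<Rightarrow> nat" where
  "Ns tau s t \<omega> = renN tau t \<omega> - renN tau s \<omega>"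

definition Tk :: "(nat \<Rightarrow> 'a \<Rightarrow> real) \<Rightarrow> real \<Rightarrow> nat \<Rightarrow> 'a \<Rightarrow> real" where
  "Tk tau s n \<omega> = (if n = 0 then s else renT tau (renN tau s \<omega> + n) \<omega>)"

definition xk :: "(nat \<Rightarrow> 'a \<Rightarrow> 'x) \<Rightarrow> (nat \<Rightarrow> 'a \<Rightarrow> real) \<Rightarrow> real \<Rightarrow> nat \<Rightarrow> 'a \<Rightarrow> 'x" where
  "xk xs tau s n \<omega> = xproc xs tau (Tk tau s n \<omega>) \<omega>"

fun lprod :: "(nat \<Rightarrow> ('y::real_normed_vector \<Rightarrow>\<^sub>L 'y)) \<Rightarrow> nat \<Rightarrow> ('y \<Rightarrow>\<^sub>L 'y)" where
  "lprod A 0 = id_blinfun"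
| "lprod A (Suc n) = lprod A n o\<^sub>L A (Suc n)"

definition rand_evol ::
  "('x \<Rightarrow> real \<Rightarrow> real \<Rightarrow> ('y::real_normed_vector \<Rightarrow>\<^sub>L 'y)) \<Rightarrow> ('x \<Rightarrow> 'x \<Rightarrow> ('y \<Rightarrow>\<^sub>L 'y)) \<Rightarrow>
   (nat \<Rightarrow> 'a \<Rightarrow> 'x) \<Rightarrow> (nat \<Rightarrow> 'a \<Rightarrow> real) \<Rightarrow> real \<Rightarrow> real \<Rightarrow> 'a \<Rightarrow> ('y \<Rightarrow>\<^sub>L 'y)" where
  "rand_evol G D xs tau s t \<omega> =
     lprod (\<lambda>k. G (xk xs tau s (k - 1) \<omega>) (Tk tau s (k - 1) \<omega>) (Tk tau s k \<omega>)
                 o\<^sub>L D (xk xs tau s (k - 1) \<omega>) (xk xs tau s k \<omega>))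
           (Ns tau s t \<omega>)
     o\<^sub>L G (xproc xs tau t \<omega>) (Tk tau s (Ns tau s t \<omega>) \<omega>) t"

definition mrp_past :: "'a measure \<Rightarrow> (nat \<Rightarrow> 'a \<Rightarrow> 'x) \<Rightarrow> (nat \<Rightarrow> 'a \<Rightarrow> real) \<Rightarrow> nat \<Rightarrow> 'a measure" where
  "mrp_past M xs tau n = sigma (space M)
     (\<Union>k\<in>{..n}. {xs k -` A \<inter> space M | A. True} \<union>
                 {renT tau k -` B \<inter> space M | B. B \<in> sets borel})"

definition markov_renewal :: "'a measure \<Rightarrow> (nat \<Rightarrow> 'a \<Rightarrow> 'x) \<Rightarrow> (nat \<Rightarrow> 'a \<Rightarrow> real) \<Rightarrow>
    ('x \<Rightarrow> 'x \<Rightarrow> real \<Rightarrow> real) \<Rightarrow> bool" where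
  "markov_renewal M xs tau Q \<longleftrightarrow>
     (\<forall>n y t. AE \<omega> in M.
        real_cond_exp M (mrp_past M xs tau n)
          (indicator {\<omega>' \<in> space M. xs (Suc n) \<omega>' = y \<and> renT tau (Suc n) \<omega>' - renT tau n \<omega>' \<le> t}) \<omega>
        = Q (xs n \<omega>) y t)"

definition aug_filt :: "'a measure \<Rightarrow> (nat \<Rightarrow> 'a \<Rightarrow> 'x) \<Rightarrow> (nat \<Rightarrow> 'a \<Rightarrow> real) \<Rightarrow> real \<Rightarrow> real \<Rightarrow> 'a measure" where
  "aug_filt M xs tau s t = sigma (space M)
     ((\<Union>n. {(\<lambda>\<omega>. xk xs tau s (min n (Ns tau s t \<omega>)) \<omega>) -` A \<inter> space M | A. True}) \<union>
      (\<Union>n. {(\<lambda>\<omega>. Tk tau s (min n (Ns tau s t \<omega>)) \<omega>) -` B \<inter> space M | B. B \<in> sets borel}) \<union>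
      null_sets M)"

end

theory Submission
  imports Defs
begin

lemma renT_0[simp]: "renT tau 0 \<omega> = 0" by (simp add: renT_def)
lemma renT_Suc: "renT tau (Suc n) \<omega> = renT tau n \<omega> + tau (Suc n) \<omega>"
  by (simp add: renT_def sum.cl_ivl_Suc)

locale rpath =
  fixes tau :: "nat \<Rightarrow> 'a \<Rightarrow> real" and \<omega> :: 'a
  assumes pos: "\<And>n. n \<ge> 1 \<Longrightarrow> tau n \<omega> > 0"
    and fin: "\<And>r. r \<in> \<rat> \<Longrightarrow> finite {n. renT tau n \<omega> \<le> r}"
begin

lemma strict: "i < j \<Longrightarrow> renT tau i \<omega> < renT tau j \<omega>"
  by (rule lift_Suc_mono_less[of "\<lambda>n. renT tau n \<omega>"]) (auto simp: renT_Suc intro: pos)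

lemma le_iff: "renT tau i \<omega> \<le> renT tau j \<omega> \<longleftrightarrow> i \<le> j"
proof
  assume "renT tau i \<omega> \<le> renT tau j \<omega>" then show "i \<le> j"
    using strict[of j i] by (cases "j < i") auto
next
  assume "i \<le> j" then show "renT tau i \<omega> \<le> renT tau j \<omega>"
    using strict[of i j] by (cases "i = j") auto
qed

lemma nonneg: "renT tau j \<omega> \<ge> 0"
  using le_iff[of 0 j] by simp

lemma fin_any: "finite {n. renT tau n \<omega> \<le> r}"
proof -
  have "{n. renT tau n \<omega> \<le> r} \<subseteq> {n. renT tau n \<omega> \<le> of_int \<lceil>r\<rceil>}"
    using le_of_int_ceiling[of r] by (auto intro: order_trans)
  then show ?thesis by (rule finite_subset) (rule fin, simp)
qed

lemma N_iff: "0 \<le> r \<Longrightarrow> renT tau j \<omega> \<le> r \<longleftrightarrow> j \<le> renN tau r \<omega>"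
proof -
  assume r: "0 \<le> r"
  let ?S = "{n. renT tau n \<omega> \<le> r}"
  have f: "finite ?S" by (rule fin_any)
  have ne: "0 \<in> ?S" using r by simp
  then have ne': "?S \<noteq> {}" by blast
  have mx: "renN tau r \<omega> \<in> ?S" unfolding renN_def using f ne' by (rule Max_in)
  show ?thesis
  proof
    assume "renT tau j \<omega> \<le> r" then show "j \<le> renN tau r \<omega>"
      unfolding renN_def using f by (intro Max_ge) auto
  next
    assume "j \<le> renN tau r \<omega>"
    then have "renT tau j \<omega> \<le> renT tau (renN tau r \<omega>) \<omega>" using le_iff by blast
    with mx show "renT tau j \<omega> \<le> r" by simp
  qed
qed

lemma N_le: "0 \<le> r \<Longrightarrow> renT tau (renN tau r \<omega>) \<omega> \<le> r"
  using N_iff[of r "renN tau r \<omega>"] by simp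

lemma N_gt: "0 \<le> r \<Longrightarrow> r < renT tau (Suc (renN tau r \<omega>)) \<omega>"
  using N_iff[of r "Suc (renN tau r \<omega>)"] by (simp add: not_le[symmetric])

lemma N_mono: "0 \<le> r \<Longrightarrow> r \<le> r' \<Longrightarrow> renN tau r \<omega> \<le> renN tau r' \<omega>"
proof -
  assume a: "0 \<le> r" "r \<le> r'"
  have "renT tau (renN tau r \<omega>) \<omega> \<le> r'" using N_le[OF a(1)] a(2) by (rule order_trans)
  then show ?thesis using N_iff[of r' "renN tau r \<omega>"] a by simp
qed

lemma N_T: "renN tau (renT tau j \<omega>) \<omega> = j"
proof -
  have "\<And>i. i \<le> renN tau (renT tau j \<omega>) \<omega> \<longleftrightarrow> i \<le> j"
    subgoal for i using N_iff[OF nonneg[of j], of i] le_iff[of i j] by simp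
    done
  from this[of j] this[of "renN tau (renT tau j \<omega>) \<omega>"] show ?thesis by simp
qed

context fixes s t :: real assumes s0: "0 \<le> s" and st: "s \<le> t"
begin

lemma Nt: "renN tau t \<omega> = renN tau s \<omega> + Ns tau s t \<omega>"
  using N_mono[OF s0 st] by (simp add: Ns_def)

lemma T_bounds: "j \<le> Ns tau s t \<omega> \<Longrightarrow> s \<le> Tk tau s j \<omega> \<and> Tk tau s j \<omega> \<le> t"
proof (cases "j = 0")
  case True then show ?thesis using st by (simp add: Tk_def)
next
  case False
  assume j: "j \<le> Ns tau s t \<omega>"
  have "s < renT tau (Suc (renN tau s \<omega>)) \<omega>" by (rule N_gt[OF s0])
  also have "\<dots> \<le> renT tau (renN tau s \<omega> + j) \<omega>" using False le_iff by simp
  finally have 1: "s \<le> renT tau (renN tau s \<omega> + j) \<omega>" by simp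
  have "renT tau (renN tau s \<omega> + j) \<omega> \<le> t"
    using N_iff[of t] s0 st j Nt by simp
  with 1 False show ?thesis by (simp add: Tk_def)
qed

lemma T_mono: "i \<le> j \<Longrightarrow> Tk tau s i \<omega> \<le> Tk tau s j \<omega>"
proof -
  assume ij: "i \<le> j"
  show ?thesis
  proof (cases "i = 0")
    case True
    then show ?thesis
    proof (cases "j = 0")
      case False
      have "s < renT tau (Suc (renN tau s \<omega>)) \<omega>" by (rule N_gt[OF s0])
      also have "\<dots> \<le> renT tau (renN tau s \<omega> + j) \<omega>" using False le_iff by simp
      finally show ?thesis using True False by (simp add: Tk_def)
    qed (simp add: Tk_def)
  next
    case False
    then show ?thesis using ij le_iff by (simp add: Tk_def)
  qed
qed

lemma T_strict: "1 \<le> j \<Longrightarrow> Tk tau s (j - 1) \<omega> < Tk tau s j \<omega>"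
proof -
  assume j: "1 \<le> j"
  show ?thesis
  proof (cases "j = 1")
    case True
    then show ?thesis using N_gt[OF s0] by (simp add: Tk_def)
  next
    case False
    then show ?thesis using j strict[of "renN tau s \<omega> + (j - 1)" "renN tau s \<omega> + j"]
      by (simp add: Tk_def)
  qed
qed

lemma x_end: "xproc xs tau t \<omega> = xk xs tau s (Ns tau s t \<omega>) \<omega>"
proof (cases "Ns tau s t \<omega> = 0")
  case True then show ?thesis using Nt by (simp add: xk_def xproc_def Tk_def)
next
  case False then show ?thesis using Nt by (simp add: xk_def xproc_def Tk_def N_T)
qed

end
end

lemma lprod_cong: "(\<And>k. 1 \<le> k \<Longrightarrow> k \<le> n \<Longrightarrow> A k = B k) \<Longrightarrow> lprod A n = lprod B n"
  by (induction n) auto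

lemma lprod_meas:
  assumes "\<And>k h. h \<in> borel_measurable F \<Longrightarrow> (\<lambda>\<omega>. blinfun_apply (A \<omega> k) (h \<omega>)) \<in> borel_measurable F"
    and "g \<in> borel_measurable F"
  shows "(\<lambda>\<omega>. blinfun_apply (lprod (A \<omega>) n) (g \<omega>)) \<in> borel_measurable F"
  using assms(2)
proof (induction n arbitrary: g)
  case 0 then show ?case by simp
next
  case (Suc n)
  have "(\<lambda>\<omega>. blinfun_apply (lprod (A \<omega>) n) (blinfun_apply (A \<omega> (Suc n)) (g \<omega>))) \<in> borel_measurable F"
    by (rule Suc.IH) (rule assms(1)[OF Suc.prems])
  then show ?case by simp
qed

theorem proposition3p2:
  fixes M :: "'a measure"
    and J :: "real set"
    and xs :: "nat \<Rightarrow> 'a \<Rightarrow> 'x::finite"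
    and tau :: "nat \<Rightarrow> 'a \<Rightarrow> real"
    and Q :: "'x \<Rightarrow> 'x \<Rightarrow> real \<Rightarrow> real"
    and G :: "'x \<Rightarrow> real \<Rightarrow> real \<Rightarrow> ('y::{banach, second_countable_topology} \<Rightarrow>\<^sub>L 'y)"
    and D :: "'x \<Rightarrow> 'x \<Rightarrow> ('y \<Rightarrow>\<^sub>L 'y)"
    and s t :: real and f :: 'y
  assumes "time_domain J"
    and "prob_space M" and "complete_measure M"
    and "\<And>n. xs n \<in> measurable M (count_space UNIV)"
    and "\<And>n. tau n \<in> borel_measurable M"
    and "\<And>n \<omega>. n \<ge> 1 \<Longrightarrow> \<omega> \<in> space M \<Longrightarrow> tau n \<omega> > 0"
    and "markov_renewal M xs tau Q"
    and "\<And>\<omega> r. \<omega> \<in> space M \<Longrightarrow> r \<in> \<rat> \<Longrightarrow> finite {n. renT tau n \<omega> \<le> r}"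
    and "\<And>x. inhom_semigroup J (G x)"
    and "\<And>u. u \<in> J \<Longrightarrow>
           (\<lambda>(r, t', x, g). blinfun_apply (G x (min r t') (max r t')) g)
             \<in> measurable (restrict_space borel (Jfrom J u) \<Otimes>\<^sub>M
                           (restrict_space borel (Jfrom J u) \<Otimes>\<^sub>M
                            (count_space UNIV \<Otimes>\<^sub>M borel))) borel"
    and "\<And>x y. norm (D x y) \<le> 1"
    and "(\<lambda>(x, y, g). blinfun_apply (D x y) g)
           \<in> measurable (count_space UNIV \<Otimes>\<^sub>M (count_space UNIV \<Otimes>\<^sub>M borel)) borel"
    and "s \<in> J" and "t \<in> Jfrom J s"
  shows "(\<lambda>\<omega>. blinfun_apply (rand_evol G D xs tau s t \<omega>) f) \<in> borel_measurable (aug_filt M xs tau s t)"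
proof -
  have s0: "0 \<le> s" using assms(1,13) unfolding time_domain_def by auto
  have st: "s \<le> t" and tJ: "t \<in> J" using assms(14) by (auto simp: Jfrom_def)
  have inJ: "\<And>x. s \<le> x \<Longrightarrow> x \<le> t \<Longrightarrow> x \<in> Jfrom J s"
    using assms(1) tJ s0 unfolding time_domain_def Jfrom_def by auto
  have rp: "\<And>\<omega>. \<omega> \<in> space M \<Longrightarrow> rpath tau \<omega>"
    using assms(6,8) by (simp add: rpath_def)
  define F where "F = aug_filt M xs tau s t"
  define NN where "NN \<omega> = Ns tau s t \<omega>" for \<omega>
  define X where "X n \<omega> = xk xs tau s (min n (NN \<omega>)) \<omega>" for n \<omega>
  define T where "T n \<omega> = Tk tau s (min n (NN \<omega>)) \<omega>" for n \<omega>
  define gen where "gen = ((\<Union>n. {X n -` A \<inter> space M | A. True}) \<union>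
      (\<Union>n. {T n -` B \<inter> space M | B. B \<in> sets borel}) \<union> null_sets M)"
  have genP: "gen \<subseteq> Pow (space M)"
    unfolding gen_def using sets.sets_into_space[of _ M] by (auto dest: null_setsD2)
  have Fe: "F = sigma (space M) gen"
    unfolding F_def aug_filt_def gen_def X_def T_def NN_def by simp
  have sF: "sets F = sigma_sets (space M) gen" unfolding Fe by (rule sets_measure_of[OF genP])
  have spF: "space F = space M" unfolding Fe by (rule space_measure_of_conv)
  have Xm: "X n \<in> measurable F (count_space UNIV)" for n
    by (rule measurableI) (auto simp: spF sF gen_def intro!: sigma_sets.Basic)
  have Tm: "T n \<in> borel_measurable F" for n
    by (rule measurableI) (auto simp: spF sF gen_def intro!: sigma_sets.Basic)
  have Tb: "s \<le> T n \<omega> \<and> T n \<omega> \<le> t" if "\<omega> \<in> space M" for n \<omega>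
    unfolding T_def NN_def by (rule rpath.T_bounds[OF rp[OF that] s0 st]) simp
  have Tmono: "T i \<omega> \<le> T j \<omega>" if "\<omega> \<in> space M" "i \<le> j" for i j \<omega>
    unfolding T_def by (rule rpath.T_mono[OF rp[OF that(1)] s0 st]) (use that(2) in simp)
  have NNeq: "NN \<omega> = m \<longleftrightarrow> ((m = 0 \<or> T m \<omega> \<noteq> T (m-1) \<omega>) \<and> T (Suc m) \<omega> = T m \<omega>)"
    if "\<omega> \<in> space M" for \<omega> m
  proof -
    have str: "Tk tau s (j - 1) \<omega> < Tk tau s j \<omega>" if "1 \<le> j" for j
      by (rule rpath.T_strict[OF rp[OF \<open>\<omega> \<in> space M\<close>] s0 st that])
    show ?thesis
    proof (cases "NN \<omega> \<ge> Suc m")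
      case True
      then have "T (Suc m) \<omega> \<noteq> T m \<omega>" using str[of "Suc m"] unfolding T_def
        by (simp add: min_def)
      then show ?thesis using True by auto
    next
      case False
      then have "NN \<omega> \<le> m" by simp
      then have 1: "T (Suc m) \<omega> = T m \<omega>" unfolding T_def by (simp add: min_absorb2)
      show ?thesis
      proof (cases "NN \<omega> = m")
        case True
        then show ?thesis using 1 str[of m] unfolding T_def by (auto simp: min_def)
      next
        case False
        with \<open>\<not> NN \<omega> \<ge> Suc m\<close> have "NN \<omega> < m" by simp
        then have "NN \<omega> \<le> m - 1" by simp
        then have "T m \<omega> = T (m - 1) \<omega>" using \<open>NN \<omega> < m\<close> unfolding T_def
          by (simp add: min_absorb2)
        then show ?thesis using False \<open>NN \<omega> < m\<close> by auto
      qed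
    qed
  qed
  have NNm: "NN \<in> measurable F (count_space UNIV)"
    unfolding measurable_count_space_eq2_countable
  proof (intro conjI ballI)
    fix m :: nat
    have "NN -` {m} \<inter> space F =
      {\<omega> \<in> space F. (m = 0 \<or> T m \<omega> \<noteq> T (m-1) \<omega>) \<and> T (Suc m) \<omega> = T m \<omega>}"
    proof (rule set_eqI)
      fix \<omega> show "\<omega> \<in> NN -` {m} \<inter> space F \<longleftrightarrow> \<omega> \<in> {\<omega> \<in> space F. (m = 0 \<or> T m \<omega> \<noteq> T (m-1) \<omega>) \<and> T (Suc m) \<omega> = T m \<omega>}"
        using NNeq[of \<omega> m] by (auto simp: spF)
    qed
    also have "\<dots> \<in> sets F" using Tm by measurable
    finally show "NN -` {m} \<inter> space F \<in> sets F" .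
  qed simp
  have Gm: "(\<lambda>\<omega>. blinfun_apply (G (x \<omega>) (r1 \<omega>) (r2 \<omega>)) (h \<omega>)) \<in> borel_measurable F"
    if "x \<in> measurable F (count_space UNIV)" "r1 \<in> borel_measurable F" "r2 \<in> borel_measurable F"
       "h \<in> borel_measurable F"
       "\<And>\<omega>. \<omega> \<in> space M \<Longrightarrow> r1 \<omega> \<in> Jfrom J s \<and> r2 \<omega> \<in> Jfrom J s \<and> r1 \<omega> \<le> r2 \<omega>"
    for x r1 r2 h
  proof -
    have "(\<lambda>\<omega>. (r1 \<omega>, r2 \<omega>, x \<omega>, h \<omega>)) \<in> measurable F
        (restrict_space borel (Jfrom J s) \<Otimes>\<^sub>M (restrict_space borel (Jfrom J s) \<Otimes>\<^sub>M
          (count_space UNIV \<Otimes>\<^sub>M borel)))"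
      using that by (intro measurable_Pair measurable_restrict_space2) (auto simp: spF)
    from measurable_compose[OF this assms(10)[OF assms(13)]]
    have "(\<lambda>\<omega>. blinfun_apply (G (x \<omega>) (min (r1 \<omega>) (r2 \<omega>)) (max (r1 \<omega>) (r2 \<omega>))) (h \<omega>))
       \<in> borel_measurable F" by simp
    then show ?thesis
      by (rule measurable_cong[THEN iffD1, rotated]) (use that(5) in \<open>auto simp: spF\<close>)
  qed
  have Dm: "(\<lambda>\<omega>. blinfun_apply (D (X i \<omega>) (X j \<omega>)) (h \<omega>)) \<in> borel_measurable F"
    if "h \<in> borel_measurable F" for i j h
  proof -
    have "(\<lambda>\<omega>. (X i \<omega>, X j \<omega>, h \<omega>)) \<in> measurable F
        (count_space UNIV \<Otimes>\<^sub>M (count_space UNIV \<Otimes>\<^sub>M borel))"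
      using that Xm by (intro measurable_Pair) auto
    from measurable_compose[OF this assms(12)] show ?thesis by simp
  qed
  define A where "A \<omega> k = G (X (k-1) \<omega>) (T (k-1) \<omega>) (T k \<omega>) o\<^sub>L D (X (k-1) \<omega>) (X k \<omega>)"
    for \<omega> k
  define H where "H m \<omega> = blinfun_apply (lprod (A \<omega>) m) (blinfun_apply (G (X m \<omega>) (T m \<omega>) t) f)"
    for m \<omega>
  have Hm: "(\<lambda>\<omega>. H m \<omega>) \<in> borel_measurable F" for m
    unfolding H_def
  proof (rule lprod_meas)
    fix k and h :: "'a \<Rightarrow> 'y" assume h: "h \<in> borel_measurable F"
    show "(\<lambda>\<omega>. blinfun_apply (A \<omega> k) (h \<omega>)) \<in> borel_measurable F"
      unfolding A_def blinfun_apply_blinfun_compose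
      by (rule Gm[OF Xm Tm Tm Dm[OF h]]) (auto intro!: inJ Tmono dest: Tb)
  next
    show "(\<lambda>\<omega>. blinfun_apply (G (X m \<omega>) (T m \<omega>) t) f) \<in> borel_measurable F"
      by (rule Gm[OF Xm Tm]) (auto intro!: inJ dest: Tb simp: st)
  qed
  have main: "(\<lambda>\<omega>. H (NN \<omega>) \<omega>) \<in> borel_measurable F"
    by (rule measurable_compose_countable[OF Hm NNm])
  have eq: "blinfun_apply (rand_evol G D xs tau s t \<omega>) f = H (NN \<omega>) \<omega>" if "\<omega> \<in> space M" for \<omega>
  proof -
    have xe: "xproc xs tau t \<omega> = X (NN \<omega>) \<omega>"
      unfolding X_def NN_def using rpath.x_end[OF rp[OF that] s0 st] by simp
    have "lprod (\<lambda>k. G (xk xs tau s (k - 1) \<omega>) (Tk tau s (k - 1) \<omega>) (Tk tau s k \<omega>)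
                 o\<^sub>L D (xk xs tau s (k - 1) \<omega>) (xk xs tau s k \<omega>)) (NN \<omega>) = lprod (A \<omega>) (NN \<omega>)"
      by (rule lprod_cong) (simp add: A_def X_def T_def)
    then show ?thesis using xe
      unfolding rand_evol_def H_def by (simp add: NN_def[symmetric] T_def X_def)
  qed
  show ?thesis unfolding F_def[symmetric]
    by (rule measurable_cong[THEN iffD1, OF _ main]) (simp add: eq spF)
qed

end
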